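(* Let $n \geq 2$. Then $\langle \phi, \chi^{(n,n)} \rangle_{S_{2n}} = 1$.
   Context: Let $\sigma = (1\ 2\ \cdots\ n) \in S_n$, regarded as an element of $S_{2n}$ via the natural inclusion $S_n \subseteq S_{2n}$ (permutations fixing $n+1,\dots,2n$). Let $C = C_{S_{2n}}(\sigma)$ be the centralizer of $\sigma$ in $S_{2n}$, $1_C$ its trivial character, and $\phi = \operatorname{Ind}_C^{S_{2n}} 1_C$. For a partition $\lambda \vdash m$, $\chi^\lambda$ denotes the irreducible complex character of $S_m$ indexed by $\lambda$ in the standard way. $\langle\cdot,\cdot\rangle_{G}$ is the usual inner product of class functions on $G$. *)

theory Defs
  imports Complex_Main "HOL-Combinatorics.Combinatorics" "HOL-Library.FuncSet"
begin

definition Sym :: "nat \<Rightarrow> (nat \<Rightarrow> nat) set" where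
  "Sym m = {p. p permutes {1..m}}"

definition centralizer :: "(nat \<Rightarrow> nat) set \<Rightarrow> (nat \<Rightarrow> nat) \<Rightarrow> (nat \<Rightarrow> nat) set" where
  "centralizer G s = {p \<in> G. p \<circ> s = s \<circ> p}"

definition cf_inner :: "(nat \<Rightarrow> nat) set \<Rightarrow> ((nat \<Rightarrow> nat) \<Rightarrow> complex) \<Rightarrow> ((nat \<Rightarrow> nat) \<Rightarrow> complex) \<Rightarrow> complex" where
  "cf_inner G f g = (\<Sum>x\<in>G. f x * cnj (g x)) / of_nat (card G)"

definition ind_cf :: "(nat \<Rightarrow> nat) set \<Rightarrow> (nat \<Rightarrow> nat) set \<Rightarrow> ((nat \<Rightarrow> nat) \<Rightarrow> complex)
    \<Rightarrow> (nat \<Rightarrow> nat) \<Rightarrow> complex" where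
  "ind_cf G H psi g =
     (\<Sum>x\<in>G. if x \<circ> g \<circ> inv x \<in> H then psi (x \<circ> g \<circ> inv x) else 0) / of_nat (card H)"

definition triv_cf :: "(nat \<Rightarrow> nat) \<Rightarrow> complex" where
  "triv_cf g = 1"

text \<open>Permutation character of S_m on the tabloids of type alpha (a composition of m with
  possibly zero parts), i.e. the character of Ind from the Young subgroup S_alpha of the trivial
  character: number of maps f: {1..m} -> {0..<l} with fibre sizes alpha and f o g = f.
  A composition with a negative entry gives the zero character (usual convention).\<close>
definition young_char :: "nat \<Rightarrow> int list \<Rightarrow> (nat \<Rightarrow> nat) \<Rightarrow> int" where
  "young_char m alpha g =
    (if (\<exists>a\<in>set alpha. a < 0) then 0
     else int (card {f \<in> {1..m} \<rightarrow>\<^sub>E {0..<length alpha}.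
                  (\<forall>i<length alpha. int (card {x\<in>{1..m}. f x = i}) = alpha ! i) \<and>
                  (\<forall>x\<in>{1..m}. f (g x) = f x)}))"

text \<open>Irreducible character chi^lambda of S_m for a partition lambda = (l_1 \<ge> ... \<ge> l_k),
  given as a list, defined by the Frobenius determinantal formula
  chi^lambda = det( xi^(lambda_i - i + j) )_{i,j}.\<close>
definition irr_char :: "nat \<Rightarrow> nat list \<Rightarrow> (nat \<Rightarrow> nat) \<Rightarrow> complex" where
  "irr_char m lam g = of_int (\<Sum>s | s permutes {0..<length lam}.
      sign s * young_char m (map (\<lambda>i. int (lam ! i) - int i + int (s i)) [0..<length lam]) g)"

end

theory Submission
  imports Defs
begin



lemma perm_split:
  assumes "A \<inter> B = {}"
  shows "bij_betw (\<lambda>(r,t). r \<circ> t) ({r. r permutes A} \<times> {t. t permutes B})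
           {p. p permutes (A \<union> B) \<and> p ` A = A}"
proof (rule bij_betw_byWitness[where f' = "\<lambda>p. (restrict_id p A, restrict_id p B)"])
  show "\<forall>a\<in>{r. r permutes A} \<times> {t. t permutes B}.
       (restrict_id ((\<lambda>(r, t). r \<circ> t) a) A, restrict_id ((\<lambda>(r, t). r \<circ> t) a) B) = a"
  proof
    fix a assume "a \<in> {r. r permutes A} \<times> {t. t permutes B}"
    then obtain r t where a: "a = (r,t)" "r permutes A" "t permutes B" by auto
    have 1: "restrict_id (r \<circ> t) A = r"
    proof
      fix x show "restrict_id (r \<circ> t) A x = r x"
        using a assms permutes_not_in[of r A x] permutes_not_in[of t B x]
        by (cases "x \<in> A") (auto simp: disjoint_iff)
    qed
    have 2: "restrict_id (r \<circ> t) B = t"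
    proof
      fix x show "restrict_id (r \<circ> t) B x = t x"
        using a assms permutes_not_in[of r A "t x"] permutes_not_in[of t B x]
          permutes_in_image[of t B x]
        by (cases "x \<in> B") (auto simp: disjoint_iff)
    qed
    show "(restrict_id ((\<lambda>(r, t). r \<circ> t) a) A, restrict_id ((\<lambda>(r, t). r \<circ> t) a) B) = a"
      using 1 2 a by simp
  qed
next
  show "\<forall>p\<in>{p. p permutes A \<union> B \<and> p ` A = A}.
       (\<lambda>(r, t). r \<circ> t) (restrict_id p A, restrict_id p B) = p"
  proof
    fix p assume "p \<in> {p. p permutes A \<union> B \<and> p ` A = A}"
    hence p: "p permutes A \<union> B" "p ` A = A" by auto
    have pB: "p x \<in> B" if "x \<in> B" for x
    proof -
      have "p x \<in> A \<union> B" using p(1) that permutes_in_image[of p "A \<union> B" x] by auto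
      moreover have "p x \<notin> A"
      proof
        assume "p x \<in> A"
        then obtain y where "y \<in> A" "p y = p x" using p(2) by (metis imageE)
        then have "y = x" using permutes_inj[OF p(1)] by (auto dest: injD)
        then show False using \<open>y \<in> A\<close> that assms by auto
      qed
      ultimately show ?thesis by auto
    qed
    show "(\<lambda>(r, t). r \<circ> t) (restrict_id p A, restrict_id p B) = p"
    proof
      fix x
      show "(\<lambda>(r, t). r \<circ> t) (restrict_id p A, restrict_id p B) x = p x"
        using pB[of x] assms permutes_not_in[OF p(1), of x]
        by (cases "x \<in> B"; cases "x \<in> A") (auto simp: restrict_id_def)
    qed
  qed
next
  show "(\<lambda>(r, t). r \<circ> t) ` ({r. r permutes A} \<times> {t. t permutes B})
    \<subseteq> {p. p permutes A \<union> B \<and> p ` A = A}"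
  proof clarify
    fix r t assume r: "r permutes A" and t: "t permutes B"
    have "r \<circ> t permutes A \<union> B"
      by (rule permutes_compose) (use permutes_subset[OF r, of "A \<union> B"] permutes_subset[OF t, of "A \<union> B"] in auto)
    moreover have "t ` A = A"
      using assms permutes_not_in[OF t] by (force simp: disjoint_iff image_iff)
    hence "(r \<circ> t) ` A = A" using permutes_image[OF r] by (metis image_comp)
    ultimately show "r \<circ> t permutes A \<union> B \<and> (r \<circ> t) ` A = A" by simp
  qed
next
  show "(\<lambda>p. (restrict_id p A, restrict_id p B)) ` {p. p permutes A \<union> B \<and> p ` A = A}
    \<subseteq> {r. r permutes A} \<times> {t. t permutes B}"
  proof (rule image_subsetI)
    fix p assume "p \<in> {p. p permutes A \<union> B \<and> p ` A = A}"
    hence p: "p permutes A \<union> B" "p ` A = A" by auto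
    have pB: "p ` B = B"
    proof -
      have "p ` (A \<union> B) = A \<union> B" using permutes_image[OF p(1)] .
      moreover have "p ` A \<inter> p ` B = {}"
        using assms permutes_inj[OF p(1)] by (simp add: image_Int[symmetric])
      ultimately show ?thesis using p(2) assms by (auto simp: image_Un)
    qed
    have "inj_on p A" "inj_on p B" using permutes_inj[OF p(1)] by (auto intro: inj_on_subset)
    then show "(restrict_id p A, restrict_id p B) \<in> {r. r permutes A} \<times> {t. t permutes B}"
      using p(2) pB by (auto intro!: permutes_restrict_id simp: bij_betw_def)
  qed
qed

lemma stab_card:
  assumes "finite B" "Z \<subseteq> B"
  shows "card {t. t permutes B \<and> t ` Z = Z} = fact (card Z) * fact (card B - card Z)"
proof -
  have e: "Z \<union> (B - Z) = B" using assms by auto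
  have "card {t. t permutes B \<and> t ` Z = Z} = card ({r. r permutes Z} \<times> {t. t permutes (B - Z)})"
    using bij_betw_same_card[OF perm_split[of Z "B - Z"]] e by auto
  also have "\<dots> = fact (card Z) * fact (card (B - Z))"
    using assms by (simp add: card_cartesian_product card_permutations finite_subset)
  also have "card (B - Z) = card B - card Z" using assms by (simp add: card_Diff_subset finite_subset)
  finally show ?thesis .
qed

lemma sum_stab:
  assumes "finite B"
  shows "(\<Sum>t\<in>{t. t permutes B}. card {Z. Z \<subseteq> B \<and> card Z = j \<and> t ` Z = Z})
         = (if j \<le> card B then fact (card B) else 0)"
proof -
  define X where "X = {Z. Z \<subseteq> B \<and> card Z = j}"
  have fX: "finite X" using assms unfolding X_def by (simp add: finite_subset)
  have fP: "finite {t. t permutes B}" using assms by (simp add: finite_permutations)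
  have "(\<Sum>t\<in>{t. t permutes B}. card {Z. Z \<subseteq> B \<and> card Z = j \<and> t ` Z = Z})
      = (\<Sum>t\<in>{t. t permutes B}. \<Sum>Z\<in>X. if t ` Z = Z then (1::nat) else 0)"
  proof (rule sum.cong[OF refl])
    fix t
    have "{Z. Z \<subseteq> B \<and> card Z = j \<and> t ` Z = Z} = {Z \<in> X. t ` Z = Z}" unfolding X_def by auto
    then show "card {Z. Z \<subseteq> B \<and> card Z = j \<and> t ` Z = Z} = (\<Sum>Z\<in>X. if t ` Z = Z then (1::nat) else 0)"
      using fX by (simp add: sum.If_cases Int_def)
  qed
  also have "\<dots> = (\<Sum>Z\<in>X. \<Sum>t\<in>{t. t permutes B}. if t ` Z = Z then (1::nat) else 0)"
    by (rule sum.swap)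
  also have "\<dots> = (\<Sum>Z\<in>X. fact j * fact (card B - j))"
  proof (rule sum.cong[OF refl])
    fix Z assume "Z \<in> X"
    hence Z: "Z \<subseteq> B" "card Z = j" unfolding X_def by auto
    have "(\<Sum>t\<in>{t. t permutes B}. if t ` Z = Z then (1::nat) else 0) = card {t \<in> {t. t permutes B}. t ` Z = Z}"
      using fP by (simp add: sum.If_cases Int_def)
    also have "{t \<in> {t. t permutes B}. t ` Z = Z} = {t. t permutes B \<and> t ` Z = Z}" by auto
    finally show "(\<Sum>t\<in>{t. t permutes B}. if t ` Z = Z then (1::nat) else 0) = fact j * fact (card B - j)"
      using stab_card[OF assms Z(1)] Z(2) by simp
  qed
  also have "\<dots> = (card B choose j) * (fact j * fact (card B - j))"
    using n_subsets[OF assms, of j] unfolding X_def by simp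
  also have "\<dots> = (if j \<le> card B then fact (card B) else 0)"
    using binomial_fact_lemma[of j "card B"] by (auto simp: ac_simps)
  finally show ?thesis .
qed

lemma img_split:
  assumes "A \<inter> B = {}" "r permutes A" "t permutes B" "Z \<subseteq> A \<union> B"
  shows "(r \<circ> t) ` Z = r ` (Z \<inter> A) \<union> t ` (Z \<inter> B)"
    and "r ` (Z \<inter> A) \<subseteq> A" and "t ` (Z \<inter> B) \<subseteq> B"
proof -
  have tA: "t x = x" if "x \<in> A" for x using permutes_not_in[OF assms(3)] that assms(1) by blast
  have rB: "r y = y" if "y \<in> B" for y using permutes_not_in[OF assms(2)] that assms(1) by blast
  have tB: "t y \<in> B" if "y \<in> B" for y using permutes_in_image[OF assms(3)] that by blast
  have rA: "r y \<in> A" if "y \<in> A" for y using permutes_in_image[OF assms(2)] that by blast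
  have rt_eq: "(r \<circ> t) x = (if x \<in> A then r x else t x)" if "x \<in> Z" for x
    using that assms(4) tA rB tB by auto
  show "(r \<circ> t) ` Z = r ` (Z \<inter> A) \<union> t ` (Z \<inter> B)"
  proof (intro equalityI subsetI)
    fix y assume "y \<in> (r \<circ> t) ` Z"
    then obtain x where x: "x \<in> Z" "y = (r \<circ> t) x" by auto
    show "y \<in> r ` (Z \<inter> A) \<union> t ` (Z \<inter> B)"
    proof (cases "x \<in> A")
      case True then show ?thesis using x rt_eq[OF x(1)] by auto
    next
      case False then have "x \<in> B" using x assms(4) by auto
      then show ?thesis using x rt_eq[OF x(1)] False by auto
    qed
  next
    fix y assume "y \<in> r ` (Z \<inter> A) \<union> t ` (Z \<inter> B)"
    then show "y \<in> (r \<circ> t) ` Z"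
    proof
      assume "y \<in> r ` (Z \<inter> A)"
      then obtain x where "x \<in> Z" "x \<in> A" "y = r x" by auto
      then show ?thesis using rt_eq[of x] by (auto intro!: image_eqI[where x = x])
    next
      assume "y \<in> t ` (Z \<inter> B)"
      then obtain x where x: "x \<in> Z" "x \<in> B" "y = t x" by auto
      then have "x \<notin> A" using assms(1) by auto
      then show ?thesis using rt_eq[of x] x by (auto intro!: image_eqI[where x = x])
    qed
  qed
  show "r ` (Z \<inter> A) \<subseteq> A" "t ` (Z \<inter> B) \<subseteq> B" using rA tB by auto
qed

lemma fix_split:
  assumes AB: "A \<inter> B = {}" and fin: "finite A" "finite B" and rt: "r permutes A" "t permutes B"
    and c: "card A \<le> c"
  shows "card {Z. Z \<subseteq> A \<union> B \<and> card Z = c \<and> (r \<circ> t) ` Z = Z}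
       = (\<Sum>Z1\<in>{Z1. Z1 \<subseteq> A \<and> r ` Z1 = Z1}.
            card {Z2. Z2 \<subseteq> B \<and> card Z2 = c - card Z1 \<and> t ` Z2 = Z2})"
proof -
  define F1 where "F1 = {Z1. Z1 \<subseteq> A \<and> r ` Z1 = Z1}"
  define S2 where "S2 = (\<lambda>Z1::'a set. {Z2. Z2 \<subseteq> B \<and> card Z2 = c - card Z1 \<and> t ` Z2 = Z2})"
  have fF1: "finite F1" using fin unfolding F1_def by (simp add: finite_subset)
  have fS2: "\<forall>a\<in>F1. finite (S2 a)" using fin unfolding S2_def by (simp add: finite_subset)
  have "bij_betw (\<lambda>(Z1,Z2). Z1 \<union> Z2) (SIGMA Z1:F1. S2 Z1)
          {Z. Z \<subseteq> A \<union> B \<and> card Z = c \<and> (r \<circ> t) ` Z = Z}"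
  proof (rule bij_betw_byWitness[where f' = "\<lambda>Z. (Z \<inter> A, Z \<inter> B)"])
    show "\<forall>a\<in>SIGMA Z1:F1. S2 Z1. ((\<lambda>(Z1, Z2). Z1 \<union> Z2) a \<inter> A, (\<lambda>(Z1, Z2). Z1 \<union> Z2) a \<inter> B) = a"
      using AB unfolding F1_def S2_def by auto
    show "\<forall>Z\<in>{Z. Z \<subseteq> A \<union> B \<and> card Z = c \<and> (r \<circ> t) ` Z = Z}. (\<lambda>(Z1, Z2). Z1 \<union> Z2) (Z \<inter> A, Z \<inter> B) = Z"
      by auto
    show "(\<lambda>(Z1, Z2). Z1 \<union> Z2) ` (SIGMA Z1:F1. S2 Z1) \<subseteq> {Z. Z \<subseteq> A \<union> B \<and> card Z = c \<and> (r \<circ> t) ` Z = Z}"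
    proof clarify
      fix Z1 Z2 assume "Z1 \<in> F1" "Z2 \<in> S2 Z1"
      hence h: "Z1 \<subseteq> A" "r ` Z1 = Z1" "Z2 \<subseteq> B" "card Z2 = c - card Z1" "t ` Z2 = Z2"
        unfolding F1_def S2_def by auto
      have sub: "Z1 \<union> Z2 \<subseteq> A \<union> B" using h by auto
      have i1: "(Z1 \<union> Z2) \<inter> A = Z1" "(Z1 \<union> Z2) \<inter> B = Z2" using h AB by auto
      have "card Z1 \<le> card A" using h(1) fin by (simp add: card_mono)
      moreover have "card (Z1 \<union> Z2) = card Z1 + card Z2"
        using h AB fin by (intro card_Un_disjoint) (auto intro: finite_subset)
      ultimately have "card (Z1 \<union> Z2) = c" using h(4) c by simp
      moreover have "(r \<circ> t) ` (Z1 \<union> Z2) = Z1 \<union> Z2"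
        using img_split(1)[OF AB rt sub] i1 h by simp
      ultimately show "Z1 \<union> Z2 \<subseteq> A \<union> B \<and> card (Z1 \<union> Z2) = c \<and> (r \<circ> t) ` (Z1 \<union> Z2) = Z1 \<union> Z2"
        using sub by simp
    qed
    show "(\<lambda>Z. (Z \<inter> A, Z \<inter> B)) ` {Z. Z \<subseteq> A \<union> B \<and> card Z = c \<and> (r \<circ> t) ` Z = Z} \<subseteq> (SIGMA Z1:F1. S2 Z1)"
    proof (rule image_subsetI)
      fix Z assume "Z \<in> {Z. Z \<subseteq> A \<union> B \<and> card Z = c \<and> (r \<circ> t) ` Z = Z}"
      hence Z: "Z \<subseteq> A \<union> B" "card Z = c" "(r \<circ> t) ` Z = Z" by auto
      note sp = img_split[OF AB rt Z(1)]
      have e1: "r ` (Z \<inter> A) = Z \<inter> A"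
      proof -
        have "r ` (Z \<inter> A) = ((r \<circ> t) ` Z) \<inter> A" using sp AB by blast
        then show ?thesis using Z(3) by simp
      qed
      have e2: "t ` (Z \<inter> B) = Z \<inter> B"
      proof -
        have "t ` (Z \<inter> B) = ((r \<circ> t) ` Z) \<inter> B" using sp AB by blast
        then show ?thesis using Z(3) by simp
      qed
      have "Z = (Z \<inter> A) \<union> (Z \<inter> B)" using Z(1) by auto
      hence "card Z = card (Z \<inter> A) + card (Z \<inter> B)"
        using fin AB by (metis card_Un_disjoint finite_Int Int_assoc Int_commute Int_empty_right Int_left_commute)
      hence "card (Z \<inter> B) = c - card (Z \<inter> A)" using Z(2) by simp
      then show "(Z \<inter> A, Z \<inter> B) \<in> (SIGMA Z1:F1. S2 Z1)"
        unfolding F1_def S2_def using e1 e2 by auto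
    qed
  qed
  then have "card {Z. Z \<subseteq> A \<union> B \<and> card Z = c \<and> (r \<circ> t) ` Z = Z} = card (SIGMA Z1:F1. S2 Z1)"
    by (simp add: bij_betw_same_card)
  also have "\<dots> = (\<Sum>Z1\<in>F1. card (S2 Z1))" using fF1 fS2 by simp
  finally show ?thesis unfolding F1_def S2_def .
qed



lemma all_less_2: "(\<forall>i<Suc (Suc 0). P i) \<longleftrightarrow> P 0 \<and> P (Suc 0)"
  by (auto simp: less_Suc_eq)

lemma young2:
  assumes g: "g permutes {1..m}" and ab: "a + b = m"
  shows "young_char m [int a, int b] g = int (card {Z. Z \<subseteq> {1..m} \<and> card Z = a \<and> g ` Z = Z})"
proof -
  define M where "M = {1..m}"
  define SF where "SF = {f \<in> M \<rightarrow>\<^sub>E {0..<2::nat}. card {x\<in>M. f x = 0} = a \<and> card {x\<in>M. f x = 1} = b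
                   \<and> (\<forall>x\<in>M. f (g x) = f x)}"
  define SZ where "SZ = {Z. Z \<subseteq> M \<and> card Z = a \<and> g ` Z = Z}"
  have gM: "g x \<in> M \<longleftrightarrow> x \<in> M" for x using permutes_in_image[OF g] unfolding M_def .
  have ginj: "inj g" using permutes_inj[OF g] .
  have fM: "finite M" unfolding M_def by simp
  have yc: "young_char m [int a, int b] g = int (card SF)"
  proof -
    have "young_char m [int a, int b] g = int (card {f \<in> {1..m} \<rightarrow>\<^sub>E {0..<length [int a, int b]}.
      (\<forall>i<length [int a, int b]. int (card {x\<in>{1..m}. f x = i}) = [int a, int b] ! i) \<and>
      (\<forall>x\<in>{1..m}. f (g x) = f x)})" unfolding young_char_def by simp
    also have "{f \<in> {1..m} \<rightarrow>\<^sub>E {0..<length [int a, int b]}.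
      (\<forall>i<length [int a, int b]. int (card {x\<in>{1..m}. f x = i}) = [int a, int b] ! i) \<and>
      (\<forall>x\<in>{1..m}. f (g x) = f x)} = SF"
      unfolding SF_def M_def numeral_2_eq_2 by (simp add: all_less_2 conj_assoc)
    finally show ?thesis .
  qed
  define kk where "kk = (\<lambda>Z x. if x \<in> M then (if x \<in> Z then 0 else 1) else (undefined::nat))"
  have "bij_betw (\<lambda>f. {x\<in>M. f x = 0}) SF SZ"
  proof (rule bij_betw_byWitness[where f' = kk])
    show "\<forall>f\<in>SF. kk {x \<in> M. f x = 0} = f"
    proof
      fix f assume "f \<in> SF"
      hence f: "f \<in> M \<rightarrow>\<^sub>E {0..<2}" by (simp add: SF_def)
      show "kk {x \<in> M. f x = 0} = f"
      proof (rule ext)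
        fix x show "kk {x \<in> M. f x = 0} x = f x"
        proof (cases "x \<in> M")
          case True
          then have "f x \<in> {0..<2}" using f by (rule PiE_mem[rotated])
          then have "f x = 0 \<or> f x = 1" by (simp add: less_2_cases_iff)
          then show ?thesis using True by (cases "f x = 0") (simp_all add: kk_def)
        next
          case False then show ?thesis using PiE_arb[OF f False] False by (simp add: kk_def)
        qed
      qed
    qed
    show "\<forall>Z\<in>SZ. {x \<in> M. kk Z x = 0} = Z"
      unfolding SZ_def kk_def by auto
    show "(\<lambda>f. {x \<in> M. f x = 0}) ` SF \<subseteq> SZ"
    proof (rule image_subsetI)
      fix f assume "f \<in> SF"
      hence f: "card {x\<in>M. f x = 0} = a" "\<forall>x\<in>M. f (g x) = f x" unfolding SF_def by auto
      define Z where "Z = {x\<in>M. f x = 0}"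
      have sub: "g ` Z \<subseteq> Z" using f(2) gM unfolding Z_def by auto
      have "card (g ` Z) = card Z" using ginj by (simp add: card_image inj_on_subset)
      hence "g ` Z = Z" using sub fM by (intro card_subset_eq) (auto simp: Z_def)
      moreover have "Z \<subseteq> M" unfolding Z_def by auto
      ultimately show "{x \<in> M. f x = 0} \<in> SZ" using f(1) unfolding SZ_def Z_def by simp
    qed
    show "kk ` SZ \<subseteq> SF"
    proof (rule image_subsetI)
      fix Z assume "Z \<in> SZ"
      hence Z: "Z \<subseteq> M" "card Z = a" "g ` Z = Z" unfolding SZ_def by auto
      define f where "f = kk Z"
      have c0: "{x\<in>M. f x = 0} = Z" using Z(1) by (auto simp: f_def kk_def)
      have c1: "{x\<in>M. f x = 1} = M - Z" by (auto simp: f_def kk_def)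
      have cm: "card M = m" unfolding M_def by simp
      have "card (M - Z) = b" using Z fM ab cm by (simp add: card_Diff_subset finite_subset)
      moreover have "g x \<in> Z \<longleftrightarrow> x \<in> Z" for x
      proof
        assume "g x \<in> Z"
        then obtain z where "z \<in> Z" "g x = g z" using Z(3) by (metis imageE)
        then show "x \<in> Z" using ginj by (auto dest: injD)
      next
        assume "x \<in> Z" then show "g x \<in> Z" using Z(3) by blast
      qed
      ultimately have fx: "\<forall>x\<in>M. f (g x) = f x" using gM by (simp add: f_def kk_def)
      have "f \<in> M \<rightarrow>\<^sub>E {0..<2}" by (auto simp: f_def kk_def)
      then show "kk Z \<in> SF" unfolding f_def[symmetric] SF_def using c0 c1 Z fx \<open>card (M - Z) = b\<close> by simp
    qed
  qed
  then have "card SF = card SZ" by (rule bij_betw_same_card)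
  then show ?thesis using yc unfolding SZ_def M_def by simp
qed


lemma conj_fix:
  assumes x: "x permutes {1..m}" and g: "g permutes {1..m}"
  shows "card {Z. Z \<subseteq> {1..m} \<and> card Z = a \<and> (x \<circ> g \<circ> inv x) ` Z = Z}
       = card {Z. Z \<subseteq> {1..m} \<and> card Z = a \<and> g ` Z = Z}"
proof (rule bij_betw_same_card[of "\<lambda>Z. inv x ` Z"], rule bij_betw_byWitness[where f' = "\<lambda>Z. x ` Z"])
  have ix: "inj x" using permutes_inj[OF x] .
  have sx: "surj x" using permutes_surj[OF x] .
  have ii: "inv x ` x ` W = W" for W using ix by (simp add: image_inv_f_f)
  have ff: "x ` inv x ` W = W" for W using sx by (simp add: image_f_inv_f)
  have xM: "x ` W \<subseteq> {1..m} \<longleftrightarrow> W \<subseteq> {1..m}" for W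
    using permutes_in_image[OF x] by auto
  have ixp: "inv x permutes {1..m}" using permutes_inv[OF x] .
  have ixM: "inv x ` W \<subseteq> {1..m} \<longleftrightarrow> W \<subseteq> {1..m}" for W
    using permutes_in_image[OF ixp] by auto
  have cx: "card (x ` W) = card W" for W using ix by (simp add: card_image inj_on_subset)
  have cix: "card (inv x ` W) = card W" for W using permutes_inj[OF ixp] by (simp add: card_image inj_on_subset)
  have img: "(x \<circ> g \<circ> inv x) ` Z = x ` g ` inv x ` Z" for Z by (simp add: image_comp)
  show "\<forall>a\<in>{Z. Z \<subseteq> {1..m} \<and> card Z = a \<and> (x \<circ> g \<circ> inv x) ` Z = Z}. x ` inv x ` a = a"
    using ff by auto
  show "\<forall>Z\<in>{Z. Z \<subseteq> {1..m} \<and> card Z = a \<and> g ` Z = Z}. inv x ` x ` Z = Z"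
    using ii by auto
  show "(`) (inv x) ` {Z. Z \<subseteq> {1..m} \<and> card Z = a \<and> (x \<circ> g \<circ> inv x) ` Z = Z}
    \<subseteq> {Z. Z \<subseteq> {1..m} \<and> card Z = a \<and> g ` Z = Z}"
  proof (rule image_subsetI)
    fix Z assume "Z \<in> {Z. Z \<subseteq> {1..m} \<and> card Z = a \<and> (x \<circ> g \<circ> inv x) ` Z = Z}"
    hence Z: "Z \<subseteq> {1..m}" "card Z = a" "x ` g ` inv x ` Z = Z" using img by auto
    have "g ` inv x ` Z = inv x ` x ` g ` inv x ` Z" using ii by simp
    also have "\<dots> = inv x ` Z" using Z(3) by simp
    finally show "inv x ` Z \<in> {Z. Z \<subseteq> {1..m} \<and> card Z = a \<and> g ` Z = Z}"
      using Z ixM cix by auto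
  qed
  show "(`) x ` {Z. Z \<subseteq> {1..m} \<and> card Z = a \<and> g ` Z = Z}
    \<subseteq> {Z. Z \<subseteq> {1..m} \<and> card Z = a \<and> (x \<circ> g \<circ> inv x) ` Z = Z}"
  proof (rule image_subsetI)
    fix Z assume "Z \<in> {Z. Z \<subseteq> {1..m} \<and> card Z = a \<and> g ` Z = Z}"
    hence Z: "Z \<subseteq> {1..m}" "card Z = a" "g ` Z = Z" by auto
    have "(x \<circ> g \<circ> inv x) ` x ` Z = x ` Z" using img ii Z(3) by simp
    then show "x ` Z \<in> {Z. Z \<subseteq> {1..m} \<and> card Z = a \<and> (x \<circ> g \<circ> inv x) ` Z = Z}"
      using Z xM cx by auto
  qed
qed


lemma upt_nn: "[0..<length [n::nat,n]] = [0, 1]" by (simp add: upt_Suc)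
lemma id_ne_tr: "id \<noteq> Transposition.transpose (0::nat) 1"
    by (metis id_apply transpose_apply_first zero_neq_one)
lemma map_nn0: "map (\<lambda>i. int ([n,n] ! i) - int i + int (id i)) [0..<length [n,n]] = [int n, int n]"
    unfolding upt_nn by simp
lemma map_nn1: "map (\<lambda>i. int ([n,n] ! i) - int i + int (Transposition.transpose 0 1 i)) [0..<length [n,n]]
      = [int n + 1, int n - 1]"
    unfolding upt_nn by simp

lemma perms2: "{s. s permutes {0..<length [n::nat,n]}} = {id, Transposition.transpose 0 1}"
proof -
  have d: "{0..<length [n,n]} = {0::nat, 1}" by auto
  show ?thesis unfolding d using permutes_doubleton_iff[of _ "0::nat" 1] by blast
qed
lemma irr_nn:
  "irr_char m [n, n] g = of_int (young_char m [int n, int n] g - young_char m [int n + 1, int n - 1] g)"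
proof -
  have "irr_char m [n, n] g = of_int (sign (id::nat\<Rightarrow>nat) * young_char m (map (\<lambda>i. int ([n,n] ! i) - int i + int (id i)) [0..<length [n,n]]) g
     + sign (Transposition.transpose (0::nat) 1) * young_char m (map (\<lambda>i. int ([n,n] ! i) - int i + int (Transposition.transpose 0 1 i)) [0..<length [n,n]]) g)"
    unfolding irr_char_def perms2 using id_ne_tr by (subst sum.insert) auto
  also have "\<dots> = of_int (young_char m [int n, int n] g - young_char m [int n + 1, int n - 1] g)"
    unfolding map_nn0 map_nn1 by (simp add: sign_swap_id)
  finally show ?thesis .
qed


lemma sigma_val:
  assumes "n \<ge> 2" "x \<in> {1..n}"
  shows "cycle_of_list [1..<n+1] x = x mod n + 1"
proof -
  define cs where "cs = [1..<n+1]"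
  have d: "distinct cs" unfolding cs_def by simp
  have len: "length cs = n" unfolding cs_def by simp
  have map: "map (cycle_of_list cs) cs = rotate1 cs"
    using cyclic_rotation[OF d, of 1] by simp
  have xi: "x - 1 < n" "cs ! (x - 1) = x" using assms unfolding cs_def by (auto simp del: upt_Suc simp add: nth_upt)
  have "cycle_of_list cs x = map (cycle_of_list cs) cs ! (x - 1)"
    using xi len by simp
  also have "\<dots> = rotate1 cs ! (x - 1)" using map by simp
  also have "\<dots> = cs ! (Suc (x - 1) mod n)" using xi len by (simp add: nth_rotate1)
  also have "\<dots> = Suc (x - 1) mod n + 1"
    unfolding cs_def using assms by (simp del: upt_Suc add: nth_upt)
  also have "Suc (x - 1) = x" using assms by auto
  finally show ?thesis unfolding cs_def .
qed

lemma sigma_moves: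
  assumes "n \<ge> 2" "x \<in> {1..n}"
  shows "cycle_of_list [1..<n+1] x \<noteq> x"
proof -
  have "x mod n + 1 \<noteq> x"
  proof (cases "x = n")
    case True then show ?thesis using assms by simp
  next
    case False then have "x < n" using assms by auto
    then show ?thesis by simp
  qed
  then show ?thesis using sigma_val[OF assms] by simp
qed

lemma sigma_perm: "cycle_of_list [1..<n+1] permutes {1..n}"
proof -
  have "set [1..<n+1] = {1..n}" by auto
  then show ?thesis using cycle_permutes[of "[1..<n+1]"] by simp
qed

lemma recip:
  assumes C: "C \<subseteq> Sym m"
    and cl: "\<And>x g. x \<in> Sym m \<Longrightarrow> g \<in> Sym m \<Longrightarrow> chi (x \<circ> g \<circ> inv x) = chi g"
  shows "(\<Sum>g\<in>Sym m. (\<Sum>x\<in>Sym m. if x \<circ> g \<circ> inv x \<in> C then triv_cf (x \<circ> g \<circ> inv x) else 0)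
            * cnj (of_int (chi g) :: complex))
         = of_nat (card (Sym m)) * (\<Sum>h\<in>C. of_int (chi h))"
proof -
  define G where "G = Sym m"
  have fG: "finite G" unfolding G_def Sym_def by (simp add: finite_permutations)
  have conj_in: "x \<circ> g \<circ> inv x \<in> G" if "x \<in> G" "g \<in> G" for x g
    using that unfolding G_def Sym_def by (auto intro!: permutes_compose permutes_inv)
  have "(\<Sum>g\<in>G. (\<Sum>x\<in>G. if x \<circ> g \<circ> inv x \<in> C then triv_cf (x \<circ> g \<circ> inv x) else 0)
            * cnj (of_int (chi g) :: complex))
      = (\<Sum>g\<in>G. \<Sum>x\<in>G. if x \<circ> g \<circ> inv x \<in> C then of_int (chi g) else 0)"
    unfolding sum_distrib_right by (intro sum.cong refl) (simp add: triv_cf_def)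
  also have "\<dots> = (\<Sum>x\<in>G. \<Sum>g\<in>G. if x \<circ> g \<circ> inv x \<in> C then of_int (chi g) else 0)"
    by (rule sum.swap)
  also have "\<dots> = (\<Sum>x\<in>G. \<Sum>h\<in>C. (of_int (chi h) :: complex))"
  proof (rule sum.cong[OF refl])
    fix x assume x: "x \<in> G"
    hence xp: "x permutes {1..m}" unfolding G_def Sym_def by simp
    have "(\<Sum>g\<in>G. if x \<circ> g \<circ> inv x \<in> C then (of_int (chi g) :: complex) else 0)
        = (\<Sum>g\<in>G. if x \<circ> g \<circ> inv x \<in> C then of_int (chi (x \<circ> g \<circ> inv x)) else 0)"
      using cl x unfolding G_def by (intro sum.cong) auto
    also have "\<dots> = (\<Sum>h\<in>G. if h \<in> C then of_int (chi h) else 0)"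
    proof (rule sum.reindex_bij_witness[where i = "\<lambda>h. inv x \<circ> h \<circ> x" and j = "\<lambda>g. x \<circ> g \<circ> inv x"])
      fix a assume "a \<in> G"
      show "inv x \<circ> (x \<circ> a \<circ> inv x) \<circ> x = a"
        by (simp add: fun_eq_iff permutes_inverses[OF xp])
      show "x \<circ> a \<circ> inv x \<in> G" using conj_in[OF x \<open>a \<in> G\<close>] .
    next
      fix b assume "b \<in> G"
      show "x \<circ> (inv x \<circ> b \<circ> x) \<circ> inv x = b"
        by (simp add: fun_eq_iff permutes_inverses[OF xp])
      have "inv x \<in> G" using xp unfolding G_def Sym_def by (simp add: permutes_inv)
      then have "inv x \<circ> b \<circ> inv (inv x) \<in> G" using conj_in \<open>b \<in> G\<close> by blast
      moreover have "inv (inv x) = x" using xp by (simp add: permutes_inv_inv)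
      ultimately show "inv x \<circ> b \<circ> x \<in> G" by simp
    qed simp
    also have "\<dots> = (\<Sum>h\<in>C. of_int (chi h))"
      using C fG unfolding G_def by (simp add: sum.If_cases Int_absorb1)
    finally show "(\<Sum>g\<in>G. if x \<circ> g \<circ> inv x \<in> C then (of_int (chi g) :: complex) else 0)
        = (\<Sum>h\<in>C. of_int (chi h))" .
  qed
  also have "\<dots> = of_nat (card G) * (\<Sum>h\<in>C. of_int (chi h))" by simp
  finally show ?thesis unfolding G_def .
qed




lemma tcomm:
  assumes s: "s permutes A" and t: "t permutes B" and AB: "A \<inter> B = {}"
  shows "t \<circ> s = s \<circ> t"
proof
  fix x
  show "(t \<circ> s) x = (s \<circ> t) x"
  proof (cases "x \<in> A")
    case True
    then have "s x \<in> A" using permutes_in_image[OF s] by simp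
    then show ?thesis using True AB permutes_not_in[OF t] by (simp add: disjoint_iff)
  next
    case False
    then have sx: "s x = x" using permutes_not_in[OF s] by simp
    have "t x \<notin> A"
    proof (cases "x \<in> B")
      case True then show ?thesis using permutes_in_image[OF t] AB by (auto simp: disjoint_iff)
    next
      case False then show ?thesis using permutes_not_in[OF t] \<open>x \<notin> A\<close> by simp
    qed
    then show ?thesis using sx permutes_not_in[OF s] by simp
  qed
qed

lemma centralizer_struct:
  fixes n :: nat
  assumes n: "n \<ge> 2"
  defines "\<sigma> \<equiv> cycle_of_list [1..<n+1]"
  defines "A \<equiv> {1..n}" and "B \<equiv> {n+1..2*n}"
  shows "bij_betw (\<lambda>(r,t). r \<circ> t) ({r. r permutes A \<and> r \<circ> \<sigma> = \<sigma> \<circ> r} \<times> {t. t permutes B})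
           (centralizer (Sym (2*n)) \<sigma>)"
proof -
  have AB: "A \<inter> B = {}" unfolding A_def B_def by auto
  have AUB: "A \<union> B = {1..2*n}" unfolding A_def B_def by auto
  have sp: "\<sigma> permutes A" unfolding \<sigma>_def A_def by (rule sigma_perm)
  have tc: "t \<circ> \<sigma> = \<sigma> \<circ> t" if "t permutes B" for t using tcomm[OF sp that AB] .
  note PS = perm_split[OF AB]
  show ?thesis
  proof (rule bij_betw_subset[OF PS])
    show "{r. r permutes A \<and> r \<circ> \<sigma> = \<sigma> \<circ> r} \<times> {t. t permutes B} \<subseteq> {r. r permutes A} \<times> {t. t permutes B}"
      by auto
    show "(\<lambda>(r, t). r \<circ> t) ` ({r. r permutes A \<and> r \<circ> \<sigma> = \<sigma> \<circ> r} \<times> {t. t permutes B}) =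
      centralizer (Sym (2 * n)) \<sigma>"
    proof (intro equalityI subsetI)
      fix p assume "p \<in> (\<lambda>(r, t). r \<circ> t) ` ({r. r permutes A \<and> r \<circ> \<sigma> = \<sigma> \<circ> r} \<times> {t. t permutes B})"
      then obtain r t where rt: "p = r \<circ> t" "r permutes A" "r \<circ> \<sigma> = \<sigma> \<circ> r" "t permutes B" by auto
      have "p permutes A \<union> B" using bij_betwE[OF PS] rt by auto
      moreover have "p \<circ> \<sigma> = \<sigma> \<circ> p"
      proof -
        have "p \<circ> \<sigma> = r \<circ> (t \<circ> \<sigma>)" using rt by (simp add: o_assoc)
        also have "\<dots> = (r \<circ> \<sigma>) \<circ> t" using tc[OF rt(4)] by (simp add: o_assoc)
        also have "\<dots> = \<sigma> \<circ> p" using rt by (simp add: o_assoc)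
        finally show ?thesis .
      qed
      ultimately show "p \<in> centralizer (Sym (2 * n)) \<sigma>"
        unfolding centralizer_def Sym_def AUB by simp
    next
      fix p assume "p \<in> centralizer (Sym (2 * n)) \<sigma>"
      hence p: "p permutes A \<union> B" "p \<circ> \<sigma> = \<sigma> \<circ> p"
        unfolding centralizer_def Sym_def AUB by auto
      have pA: "p ` A \<subseteq> A"
      proof
        fix y assume "y \<in> p ` A"
        then obtain x where x: "x \<in> A" "y = p x" by auto
        show "y \<in> A"
        proof (rule ccontr)
          assume "y \<notin> A"
          then have "\<sigma> y = y" using permutes_not_in[OF sp] by simp
          moreover have "\<sigma> (p x) = p (\<sigma> x)" using p(2) by (metis comp_apply)
          ultimately have "p (\<sigma> x) = p x" using x by simp
          then have "\<sigma> x = x" using permutes_inj[OF p(1)] by (auto dest: injD)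
          then show False using sigma_moves[OF n, of x] x unfolding \<sigma>_def A_def by simp
        qed
      qed
      have "p ` A = A"
        using pA permutes_inj[OF p(1)] unfolding A_def
        by (intro endo_inj_surj) (auto intro: inj_on_subset simp: A_def)
      then have "p \<in> {p. p permutes A \<union> B \<and> p ` A = A}" using p by simp
      then obtain r t where rt: "(r,t) \<in> {r. r permutes A} \<times> {t. t permutes B}" "p = r \<circ> t"
        using bij_betw_imp_surj_on[OF PS] by (metis (no_types, lifting) image_iff prod.collapse case_prod_beta)
      have rs: "r \<circ> \<sigma> = \<sigma> \<circ> r"
      proof -
        have tp: "t permutes B" using rt by auto
        have "(r \<circ> \<sigma>) \<circ> t = r \<circ> (t \<circ> \<sigma>)" using tc[OF tp] by (simp add: o_assoc)
        also have "\<dots> = p \<circ> \<sigma>" using rt by (simp add: o_assoc)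
        also have "\<dots> = (\<sigma> \<circ> r) \<circ> t" using p(2) rt by (simp add: o_assoc)
        finally have eq: "(r \<circ> \<sigma>) \<circ> t = (\<sigma> \<circ> r) \<circ> t" .
        show ?thesis
        proof
          fix y
          have "((r \<circ> \<sigma>) \<circ> t) (inv t y) = ((\<sigma> \<circ> r) \<circ> t) (inv t y)" using eq by simp
          then show "(r \<circ> \<sigma>) y = (\<sigma> \<circ> r) y" by (simp add: permutes_inverses[OF tp])
        qed
      qed
      show "p \<in> (\<lambda>(r, t). r \<circ> t) ` ({r. r permutes A \<and> r \<circ> \<sigma> = \<sigma> \<circ> r} \<times> {t. t permutes B})"
        using rt rs by (auto intro!: image_eqI[where x = "(r,t)"])
    qed
  qed
qed

lemma sum_t:
  assumes AB: "A \<inter> B = {}" and fin: "finite A" "finite B" and r: "r permutes A" and c: "card A \<le> c"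
  shows "(\<Sum>t\<in>{t. t permutes B}. card {Z. Z \<subseteq> A \<union> B \<and> card Z = c \<and> (r \<circ> t) ` Z = Z})
       = (\<Sum>Z1\<in>{Z1. Z1 \<subseteq> A \<and> r ` Z1 = Z1}. if c - card Z1 \<le> card B then fact (card B) else 0)"
proof -
  have fF: "finite {Z1. Z1 \<subseteq> A \<and> r ` Z1 = Z1}" using fin by (simp add: finite_subset)
  have fT: "finite {t. t permutes B}" using fin by (simp add: finite_permutations)
  have "(\<Sum>t\<in>{t. t permutes B}. card {Z. Z \<subseteq> A \<union> B \<and> card Z = c \<and> (r \<circ> t) ` Z = Z})
      = (\<Sum>t\<in>{t. t permutes B}. \<Sum>Z1\<in>{Z1. Z1 \<subseteq> A \<and> r ` Z1 = Z1}.
            card {Z2. Z2 \<subseteq> B \<and> card Z2 = c - card Z1 \<and> t ` Z2 = Z2})"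
    by (intro sum.cong refl fix_split[OF AB fin r _ c]) simp
  also have "\<dots> = (\<Sum>Z1\<in>{Z1. Z1 \<subseteq> A \<and> r ` Z1 = Z1}. \<Sum>t\<in>{t. t permutes B}.
            card {Z2. Z2 \<subseteq> B \<and> card Z2 = c - card Z1 \<and> t ` Z2 = Z2})"
    by (rule sum.swap)
  also have "\<dots> = (\<Sum>Z1\<in>{Z1. Z1 \<subseteq> A \<and> r ` Z1 = Z1}. if c - card Z1 \<le> card B then fact (card B) else 0)"
    by (intro sum.cong refl sum_stab[OF fin(2)])
  finally show ?thesis .
qed

lemma count_C:
  fixes n :: nat
  assumes n: "n \<ge> 2"
  defines "\<sigma> \<equiv> cycle_of_list [1..<n+1]"
  defines "C \<equiv> centralizer (Sym (2*n)) \<sigma>"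
  shows "(\<Sum>h\<in>C. int (card {Z. Z \<subseteq> {1..2*n} \<and> card Z = n \<and> h ` Z = Z})
                 - int (card {Z. Z \<subseteq> {1..2*n} \<and> card Z = n + 1 \<and> h ` Z = Z})) = int (card C)"
proof -
  define A where "A = {1..n}"
  define B where "B = {n+1..2*n}"
  define R where "R = {r. r permutes A \<and> r \<circ> \<sigma> = \<sigma> \<circ> r}"
  define T where "T = {t. t permutes B}"
  have AB: "A \<inter> B = {}" unfolding A_def B_def by auto
  have AUB: "{1..2*n} = A \<union> B" unfolding A_def B_def by auto
  have fA: "finite A" and fB: "finite B" unfolding A_def B_def by auto
  have cA: "card A = n" and cB: "card B = n" unfolding A_def B_def by auto
  have bij: "bij_betw (\<lambda>(r,t). r \<circ> t) (R \<times> T) C"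
    using centralizer_struct[OF n] unfolding R_def T_def A_def B_def C_def \<sigma>_def by simp
  have fR: "finite R" unfolding R_def using fA by (auto intro: finite_subset[OF _ finite_permutations[OF fA]])
  have fT: "finite T" unfolding T_def using fB by (simp add: finite_permutations)
  have cT: "card T = fact n" unfolding T_def using card_permutations[OF cB fB] .
  have cC: "card C = card R * fact n"
    using bij_betw_same_card[OF bij] cT by (simp add: card_cartesian_product)
  define F where "F = (\<lambda>h. int (card {Z. Z \<subseteq> {1..2*n} \<and> card Z = n \<and> h ` Z = Z})
                 - int (card {Z. Z \<subseteq> {1..2*n} \<and> card Z = n + 1 \<and> h ` Z = Z}))"
  have inner: "(\<Sum>t\<in>T. F (r \<circ> t)) = int (fact n)" if r: "r \<in> R" for r
  proof -
    have rp: "r permutes A" using r unfolding R_def by simp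
    define F1 where "F1 = {Z1. Z1 \<subseteq> A \<and> r ` Z1 = Z1}"
    have fF1: "finite F1" unfolding F1_def using fA by (simp add: finite_subset)
    have e1: "(\<Sum>t\<in>T. card {Z. Z \<subseteq> {1..2*n} \<and> card Z = n \<and> (r \<circ> t) ` Z = Z})
        = (\<Sum>Z1\<in>F1. fact n)"
      unfolding AUB T_def F1_def using sum_t[OF AB fA fB rp, of n] cA cB by simp
    have e2: "(\<Sum>t\<in>T. card {Z. Z \<subseteq> {1..2*n} \<and> card Z = n + 1 \<and> (r \<circ> t) ` Z = Z})
        = (\<Sum>Z1\<in>F1. if Z1 = {} then 0 else fact n)"
    proof -
      have "(\<Sum>t\<in>T. card {Z. Z \<subseteq> {1..2*n} \<and> card Z = n + 1 \<and> (r \<circ> t) ` Z = Z})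
          = (\<Sum>Z1\<in>F1. if n + 1 - card Z1 \<le> n then fact n else 0)"
        unfolding AUB T_def F1_def using sum_t[OF AB fA fB rp, of "n+1"] cA unfolding cB by simp
      also have "\<dots> = (\<Sum>Z1\<in>F1. if Z1 = {} then 0 else fact n)"
      proof (intro sum.cong refl)
        fix Z1 assume "Z1 \<in> F1"
        then have "finite Z1" unfolding F1_def using fA by (auto intro: finite_subset)
        then have "card Z1 = 0 \<longleftrightarrow> Z1 = {}" by simp
        then show "(if n + 1 - card Z1 \<le> n then fact n else 0) = (if Z1 = {} then 0 else (fact n :: nat))"
          by auto
      qed
      finally show ?thesis .
    qed
    have emp: "{} \<in> F1" unfolding F1_def by simp
    have "(\<Sum>Z1\<in>F1. (fact n :: nat)) = (\<Sum>Z1\<in>F1. (if Z1 = {} then fact n else 0) + (if Z1 = {} then 0 else fact n))"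
      by (intro sum.cong refl) simp
    also have "\<dots> = fact n + (\<Sum>Z1\<in>F1. if Z1 = {} then 0 else fact n)"
      using fF1 emp by (simp add: sum.distrib)
    finally have key: "(\<Sum>Z1\<in>F1. (fact n :: nat)) = fact n + (\<Sum>Z1\<in>F1. if Z1 = {} then 0 else fact n)" .
    have "(\<Sum>t\<in>T. F (r \<circ> t)) = int (\<Sum>t\<in>T. card {Z. Z \<subseteq> {1..2*n} \<and> card Z = n \<and> (r \<circ> t) ` Z = Z})
        - int (\<Sum>t\<in>T. card {Z. Z \<subseteq> {1..2*n} \<and> card Z = n + 1 \<and> (r \<circ> t) ` Z = Z})"
      unfolding F_def by (simp add: sum_subtractf)
    also have "\<dots> = int (fact n)" unfolding e1 e2 key by simp
    finally show ?thesis .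
  qed
  have "(\<Sum>h\<in>C. F h) = (\<Sum>x\<in>R \<times> T. F ((\<lambda>(r,t). r \<circ> t) x))"
    by (rule sum.reindex_bij_betw[OF bij, symmetric])
  also have "\<dots> = (\<Sum>r\<in>R. \<Sum>t\<in>T. F (r \<circ> t))"
    by (simp add: sum.cartesian_product case_prod_unfold)
  also have "\<dots> = (\<Sum>r\<in>R. int (fact n))" using inner by simp
  also have "\<dots> = int (card C)" using cC by simp
  finally show ?thesis unfolding F_def .
qed



theorem proposition3p3:
  fixes n :: nat
  assumes "n \<ge> 2"
  shows "cf_inner (Sym (2*n))
           (ind_cf (Sym (2*n)) (centralizer (Sym (2*n)) (cycle_of_list [1..<n+1])) triv_cf)
           (irr_char (2*n) [n, n]) = 1"
proof -
  define G where "G = Sym (2*n)"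
  define \<sigma> where "\<sigma> = cycle_of_list [1..<n+1]"
  define C where "C = centralizer G \<sigma>"
  define chi where "chi = (\<lambda>g. young_char (2*n) [int n, int n] g - young_char (2*n) [int (n+1), int (n-1)] g)"
  define fixc where "fixc = (\<lambda>c h. card {Z. Z \<subseteq> {1..2*n} \<and> card Z = c \<and> h ` Z = Z})"
  have irr: "irr_char (2*n) [n,n] g = of_int (chi g)" for g
    using assms unfolding chi_def irr_nn by (simp add: of_nat_diff add.commute)
  have chiY: "chi g = int (fixc n g) - int (fixc (n+1) g)" if "g \<in> G" for g
  proof -
    have gp: "g permutes {1..2*n}" using that unfolding G_def Sym_def by simp
    have "n + 1 + (n - 1) = 2 * n" using assms by simp
    then show ?thesis unfolding chi_def fixc_def
      using young2[OF gp, of n n] young2[OF gp, of "n+1" "n-1"] by simp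
  qed
  have conj_in: "x \<circ> g \<circ> inv x \<in> G" if "x \<in> G" "g \<in> G" for x g
    using that unfolding G_def Sym_def by (auto intro!: permutes_compose permutes_inv)
  have cl: "chi (x \<circ> g \<circ> inv x) = chi g" if "x \<in> G" "g \<in> G" for x g
  proof -
    have xp: "x permutes {1..2*n}" and gp: "g permutes {1..2*n}" using that unfolding G_def Sym_def by auto
    show ?thesis using chiY[OF conj_in[OF that]] chiY[OF that(2)]
      unfolding fixc_def using conj_fix[OF xp gp] by simp
  qed
  have CG: "C \<subseteq> G" unfolding C_def centralizer_def by auto
  have fG: "finite G" unfolding G_def Sym_def by (simp add: finite_permutations)
  have fC: "finite C" using finite_subset[OF CG fG] .
  have idC: "id \<in> C" unfolding C_def centralizer_def G_def Sym_def by simp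
  have cC: "card C > 0" using fC idC card_gt_0_iff by blast
  have cG: "card G > 0" using fG CG idC card_gt_0_iff by blast
  have sumC: "(\<Sum>h\<in>C. chi h) = int (card C)"
  proof -
    have "(\<Sum>h\<in>C. chi h) = (\<Sum>h\<in>C. int (fixc n h) - int (fixc (n+1) h))"
      using CG chiY by (intro sum.cong) auto
    also have "\<dots> = int (card C)"
      using count_C[OF assms] unfolding fixc_def C_def G_def \<sigma>_def by simp
    finally show ?thesis .
  qed
  have R: "(\<Sum>g\<in>G. (\<Sum>x\<in>G. if x \<circ> g \<circ> inv x \<in> C then triv_cf (x \<circ> g \<circ> inv x) else 0)
            * cnj (of_int (chi g) :: complex))
         = of_nat (card G) * (\<Sum>h\<in>C. of_int (chi h))"
    using recip[of C "2*n" chi] CG cl unfolding G_def by blast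
  have "cf_inner G (ind_cf G C triv_cf) (irr_char (2*n) [n, n])
      = (\<Sum>g\<in>G. ((\<Sum>x\<in>G. if x \<circ> g \<circ> inv x \<in> C then triv_cf (x \<circ> g \<circ> inv x) else 0) / of_nat (card C))
            * cnj (of_int (chi g) :: complex)) / of_nat (card G)"
    unfolding cf_inner_def ind_cf_def irr ..
  also have "\<dots> = ((\<Sum>g\<in>G. (\<Sum>x\<in>G. if x \<circ> g \<circ> inv x \<in> C then triv_cf (x \<circ> g \<circ> inv x) else 0)
            * cnj (of_int (chi g) :: complex)) / of_nat (card C)) / of_nat (card G)"
    by (intro arg_cong[where f = "\<lambda>z. z / of_nat (card G)"])
       (simp only: sum_divide_distrib, intro sum.cong refl, simp add: sum_divide_distrib[symmetric])
  also have "\<dots> = (of_nat (card G) * of_int (\<Sum>h\<in>C. chi h) / of_nat (card C)) / of_nat (card G)"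
    unfolding R by simp
  also have "\<dots> = 1" using sumC cC cG by simp
  finally show ?thesis unfolding G_def C_def \<sigma>_def .
qed

end
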